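(* Consider a linear many-worlds theory in which every permutation of worlds is an allowed transformation, i.e. every operator $T$ with $T_{ij}=\delta_{i,\pi(j)}$ for a bijection $\pi$ of $\{0,1,2,\dots\}$ is allowed. Let $p$ be a probability rule for this theory satisfying Axioms (A1)–(A3). Let $v=\sum_{n=0}^{N-1}v_n\lvert n\rangle$ be an allowed bounded state, so that $v_n=0$ for all $n\ge N$. If $v_n=v_m$ for some $n,m$, then $p_n(v)=p_m(v)$.
   Context: A linear many-worlds theory consists of the following data. The worlds are the vectors $\lvert n\rangle$, $n\in\{0,1,2,\dots\}$, of a countably infinite orthonormal basis of a real or complex vector space. A state is a vector $v=\sum_n v_n\lvert n\rangle$, and $v_n=\langle n\vert v\rangle$ is the amplitude of world $n$. A transformation is a linear operator $T$ with matrix elements $T_{ij}=\langle i\rvert T\lvert j\rangle$, acting by $v\mapsto v'=Tv$. A theory specifies a set of allowed states and a set of allowed transformations, and every allowed transformation maps allowed states to allowed states. A state is bounded if only finitely many of its amplitudes are nonzero. A probability rule assigns to each allowed state $v$ a sequence $(p_n(v))_{n\ge 0}$ of nonnegative reals with $\sum_n p_n(v)=1$. For a transformation $T$ and state $v$ we write $p'_n=p_n(Tv)$. The axioms are: (A1) Present state dependence: $p_n$ depends only on the present state $v$, so $p$ is a function of the state alone. (A2) Weak connection with amplitudes: for every allowed state $v$, $v_n=0$ implies $p_n(v)=0$. (A3) Weak connection with transformations: for every allowed state $v$ and allowed transformation $T$, and every partition of $\{0,1,2,\dots\}$ into subsets $\mathcal S_k$ such that $T_{ij}=0$ whenever $i$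 and $j$ lie in different subsets, we have $\sum_{n\in\mathcal S_k}p_n(v)=\sum_{n\in\mathcal S_k}p_n(Tv)$ for every $k$. *)

theory Defs
  imports "HOL-Analysis.Analysis"
begin

text \<open>States are identified with their amplitude sequences v :: nat => 'a, with
  v n the amplitude of world n.\<close>

definition basis_vec :: "nat \<Rightarrow> (nat \<Rightarrow> 'a::real_normed_field)" where
  "basis_vec j = (\<lambda>k. if k = j then 1 else 0)"

definition mat_el :: "((nat \<Rightarrow> 'a::real_normed_field) \<Rightarrow> (nat \<Rightarrow> 'a)) \<Rightarrow> nat \<Rightarrow> nat \<Rightarrow> 'a" where
  "mat_el T i j = T (basis_vec j) i"

definition linear_op :: "((nat \<Rightarrow> 'a::real_normed_field) \<Rightarrow> (nat \<Rightarrow> 'a)) \<Rightarrow> bool" where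
  "linear_op T \<longleftrightarrow>
     (\<forall>u w. T (\<lambda>k. u k + w k) = (\<lambda>k. T u k + T w k)) \<and>
     (\<forall>c u. T (\<lambda>k. c * u k) = (\<lambda>k. c * T u k))"

definition lin_mw_theory ::
  "(nat \<Rightarrow> 'a::real_normed_field) set \<Rightarrow> ((nat \<Rightarrow> 'a) \<Rightarrow> (nat \<Rightarrow> 'a)) set \<Rightarrow> bool" where
  "lin_mw_theory States Trans \<longleftrightarrow>
     (\<forall>T\<in>Trans. linear_op T) \<and> (\<forall>T\<in>Trans. \<forall>v\<in>States. T v \<in> States)"

text \<open>Permutation operator with T_ij = delta_{i, pi j}, i.e. (T v) i = v (inv pi i).\<close>
definition perm_op :: "(nat \<Rightarrow> nat) \<Rightarrow> (nat \<Rightarrow> 'a::real_normed_field) \<Rightarrow> (nat \<Rightarrow> 'a)" where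
  "perm_op \<pi> v = (\<lambda>i. v (inv \<pi> i))"

definition is_partition :: "nat set set \<Rightarrow> bool" where
  "is_partition S \<longleftrightarrow> \<Union>S = UNIV \<and> (\<forall>A\<in>S. \<forall>B\<in>S. A \<noteq> B \<longrightarrow> A \<inter> B = {})"

text \<open>A probability rule p (a function of the present state alone, axiom A1)
  satisfying axioms A2 and A3.\<close>
definition prob_rule ::
  "(nat \<Rightarrow> 'a::real_normed_field) set \<Rightarrow> ((nat \<Rightarrow> 'a) \<Rightarrow> (nat \<Rightarrow> 'a)) set
     \<Rightarrow> ((nat \<Rightarrow> 'a) \<Rightarrow> nat \<Rightarrow> real) \<Rightarrow> bool" where
  "prob_rule States Trans p \<longleftrightarrow>
     (\<forall>v\<in>States. (\<forall>n. p v n \<ge> 0) \<and> (p v) sums 1) \<and>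
     (\<forall>v\<in>States. \<forall>n. v n = 0 \<longrightarrow> p v n = 0) \<and>
     (\<forall>v\<in>States. \<forall>T\<in>Trans. \<forall>S. is_partition S \<and>
        (\<forall>i j. (\<exists>A\<in>S. i \<in> A \<and> j \<notin> A) \<longrightarrow> mat_el T i j = 0) \<longrightarrow>
        (\<forall>A\<in>S. infsum (p v) A = infsum (p (T v)) A))"

end

theory Submission
  imports Defs
begin

definition sw :: "nat \<Rightarrow> nat \<Rightarrow> nat \<Rightarrow> nat" where
  "sw a b = (\<lambda>i. if i = a then b else if i = b then a else i)"

lemma sw_invol: "sw a b (sw a b i) = i"
  by (simp add: sw_def)

lemma sw_bij: "bij (sw a b)"
  by (rule o_bij[where g="sw a b"]) (simp_all add: fun_eq_iff sw_invol)

lemma sw_inv: "inv (sw a b) = sw a b"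
  by (rule inv_unique_comp) (simp_all add: fun_eq_iff sw_invol)

lemma perm_sw: "perm_op (sw a b) u = (\<lambda>i. u (sw a b i))"
  by (simp add: perm_op_def sw_inv)

lemma keyL:
  fixes States :: "(nat \<Rightarrow> 'a::real_normed_field) set"
    and Trans :: "((nat \<Rightarrow> 'a) \<Rightarrow> (nat \<Rightarrow> 'a)) set"
    and p :: "(nat \<Rightarrow> 'a) \<Rightarrow> nat \<Rightarrow> real"
  assumes T: "perm_op (sw a b) \<in> Trans"
    and lin: "lin_mw_theory States Trans"
    and pr: "prob_rule States Trans p"
    and u: "u \<in> States" and ub: "u b = 0" and ab: "a \<noteq> b"
  shows "p u a = p (perm_op (sw a b) u) b"
    and "\<And>c. c \<noteq> a \<Longrightarrow> c \<noteq> b \<Longrightarrow> p u c = p (perm_op (sw a b) u) c"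
proof -
  let ?T = "perm_op (sw a b) :: (nat \<Rightarrow> 'a) \<Rightarrow> _"
  have Tu: "?T u \<in> States" using lin T u unfolding lin_mw_theory_def by blast
  define S where "S = insert {a,b} {{k} | k. k \<noteq> a \<and> k \<noteq> b}"
  have part: "is_partition S" unfolding is_partition_def S_def by auto
  have me: "mat_el ?T i j = (if sw a b i = j then 1 else 0)" for i j
    by (simp add: mat_el_def perm_sw basis_vec_def)
  have blk: "\<forall>i j. (\<exists>A\<in>S. i \<in> A \<and> j \<notin> A) \<longrightarrow> mat_el ?T i j = 0"
    unfolding me S_def by (auto simp: sw_def)
  have eq: "\<forall>A\<in>S. infsum (p u) A = infsum (p (?T u)) A"
    using pr u T part blk unfolding prob_rule_def by blast
  have z1: "p u b = 0" using pr u ub unfolding prob_rule_def by blast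
  have "?T u a = 0" unfolding perm_sw using ub by (simp add: sw_def)
  then have z2: "p (?T u) a = 0" using pr Tu unfolding prob_rule_def by blast
  have "infsum (p u) {a,b} = infsum (p (?T u)) {a,b}" using eq S_def by auto
  then have "p u a + p u b = p (?T u) a + p (?T u) b" using ab by simp
  then show "p u a = p (?T u) b" using z1 z2 by simp
  fix c assume "c \<noteq> a" "c \<noteq> b"
  then have "{c} \<in> S" unfolding S_def by auto
  then have "infsum (p u) {c} = infsum (p (?T u)) {c}" using eq by blast
  then show "p u c = p (?T u) c" by simp
qed

theorem lemma1:
  fixes States :: "(nat \<Rightarrow> 'a::real_normed_field) set"
    and Trans :: "((nat \<Rightarrow> 'a) \<Rightarrow> (nat \<Rightarrow> 'a)) set"
    and p :: "(nat \<Rightarrow> 'a) \<Rightarrow> nat \<Rightarrow> real"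
    and v :: "nat \<Rightarrow> 'a" and N n m :: nat
  assumes "lin_mw_theory States Trans"
    and "\<forall>\<pi>::nat \<Rightarrow> nat. bij \<pi> \<longrightarrow> perm_op \<pi> \<in> Trans"
    and "prob_rule States Trans p"
    and "v \<in> States"
    and "\<forall>k\<ge>N. v k = 0"
    and "v n = v m"
  shows "p v n = p v m"
proof (cases "v n = 0 \<or> n = m")
  case True
  then show ?thesis using assms(3,4,6) unfolding prob_rule_def by metis
next
  case False
  have vn: "v n \<noteq> 0" and nm: "n \<noteq> m" using False by auto
  have n1: "n < N"
  proof (rule ccontr)
    assume "\<not> n < N" then have "v n = 0" using assms(5) by simp
    then show False using vn by simp
  qed
  have m1: "m < N"
  proof (rule ccontr)
    assume "\<not> m < N" then have "v m = 0" using assms(5) by simp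
    then show False using vn assms(6) by simp
  qed
  note nN = n1 m1 nm
  have Ts: "perm_op (sw a b) \<in> Trans" for a b using assms(2) sw_bij by blast
  have vN: "v N = 0" using assms(5) by simp
  define x where "x = perm_op (sw m N) v"
  define z where "z = perm_op (sw n N) v"
  have x1: "p v m = p x N" unfolding x_def
    using keyL(1)[OF Ts assms(1,3,4) vN] nN by simp
  have z1: "p v n = p z N" unfolding z_def
    using keyL(1)[OF Ts assms(1,3,4) vN] nN by simp
  have xS: "x \<in> States" using assms(1,4) Ts unfolding x_def lin_mw_theory_def by blast
  have xm: "x m = 0" unfolding x_def perm_sw using vN by (simp add: sw_def)
  have zx: "z = perm_op (sw n m) x"
    unfolding x_def z_def perm_sw using nN assms(6) by (auto simp: sw_def)
  have "p x N = p z N" unfolding zx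
    using keyL(2)[OF Ts assms(1,3) xS xm] nN by simp
  then show ?thesis using x1 z1 by simp
qed

end
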